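(* Let $E$ and $D$ be open ellipsoids in $\mathbb{R}^n$, $n\ge2$ (sets of the form $\{x: {}^t(x-c)P(x-c)<1\}$ with $P$ positive definite), whose boundaries do not intersect transversally at any point, i.e. at every point of $\partial E\cap\partial D$ the normal vectors to $\partial E$ and $\partial D$ are linearly dependent. If $E\cap D\ne\emptyset$, then $E\subset D$ or $D\subset E$. *)

theory Defs
  imports "HOL-Analysis.Analysis"
begin

definition pos_def_matrix :: "real^'n^'n \<Rightarrow> bool" where
  "pos_def_matrix P \<longleftrightarrow> transpose P = P \<and> (\<forall>x. x \<noteq> 0 \<longrightarrow> x \<bullet> (P *v x) > 0)"

definition ellipsoid :: "real^'n^'n \<Rightarrow> real^'n \<Rightarrow> (real^'n) set" where
  "ellipsoid P c = {x. (x - c) \<bullet> (P *v (x - c)) < 1}"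

text \<open>Normal vector to the boundary of the ellipsoid at x: the gradient of
  the defining quadratic function (x - c)^t P (x - c), i.e. 2 P (x - c).\<close>
definition ellipsoid_normal :: "real^'n^'n \<Rightarrow> real^'n \<Rightarrow> real^'n \<Rightarrow> real^'n" where
  "ellipsoid_normal P c x = 2 *\<^sub>R (P *v (x - c))"

definition lin_dep2 :: "real^'n \<Rightarrow> real^'n \<Rightarrow> bool" where
  "lin_dep2 u v \<longleftrightarrow> (\<exists>a b. (a \<noteq> 0 \<or> b \<noteq> 0) \<and> a *\<^sub>R u + b *\<^sub>R v = 0)"

end

theory Submission
  imports Defs
begin

lemma sym_inner:
  fixes P :: "real^'n^'n"
  assumes "transpose P = P"
  shows "x \<bullet> (P *v y) = y \<bullet> (P *v x)"
proof -
  have "x \<bullet> (P *v y) = (x v* P) \<bullet> y" by (simp add: dot_lmul_matrix)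
  also have "x v* P = transpose P *v x" by simp
  also have "\<dots> = P *v x" using assms by simp
  finally show ?thesis by (simp add: inner_commute)
qed

lemma pd_sym: "pos_def_matrix P \<Longrightarrow> x \<bullet> (P *v y) = y \<bullet> (P *v x)"
  unfolding pos_def_matrix_def using sym_inner by blast

lemma pd_psd: "pos_def_matrix P \<Longrightarrow> 0 \<le> x \<bullet> (P *v x)"
  unfolding pos_def_matrix_def by (cases "x = 0") (auto intro: less_imp_le)

lemma pd_pos: "pos_def_matrix P \<Longrightarrow> x \<noteq> 0 \<Longrightarrow> 0 < x \<bullet> (P *v x)"
  unfolding pos_def_matrix_def by auto

lemma pd_nz: "pos_def_matrix P \<Longrightarrow> x \<noteq> 0 \<Longrightarrow> P *v x \<noteq> 0"
  using pd_pos by fastforce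

lemma sym_expand:
  fixes P :: "real^'n^'n"
  assumes "transpose P = P"
  shows "(u + v) \<bullet> (P *v (u + v)) = u \<bullet> (P *v u) + 2 * (v \<bullet> (P *v u)) + v \<bullet> (P *v v)"
  using sym_inner[OF assms, of u v]
  by (simp add: matrix_vector_right_distrib inner_add_left inner_add_right)

lemma scale_quad:
  fixes P :: "real^'n^'n"
  shows "(r *\<^sub>R u) \<bullet> (P *v (r *\<^sub>R u)) = r^2 * (u \<bullet> (P *v u))"
  by (simp add: matrix_vector_mult_scaleR power2_eq_square)

lemma pd_expand: "pos_def_matrix P \<Longrightarrow>
  (u + v) \<bullet> (P *v (u + v)) = u \<bullet> (P *v u) + 2 * (v \<bullet> (P *v u)) + v \<bullet> (P *v v)"
  unfolding pos_def_matrix_def using sym_expand by blast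


lemma level_frontier:
  assumes P: "pos_def_matrix P" and x: "(x - c) \<bullet> (P *v (x - c)) = 1"
  shows "x \<in> frontier (ellipsoid P c)"
  unfolding frontier_straddle
proof (intro allI impI conjI)
  fix e :: real assume e: "e > 0"
  have xc: "x \<noteq> c" using x by auto
  define \<delta> where "\<delta> = min (1/2) (e / (2 * norm (x - c)))"
  have d0: "0 < \<delta>" "\<delta> \<le> 1/2" using e xc by (auto simp: \<delta>_def)
  define y where "y = c + (1 - \<delta>) *\<^sub>R (x - c)"
  have "(y - c) \<bullet> (P *v (y - c)) = (1 - \<delta>)^2" unfolding y_def using x scale_quad[of "1 - \<delta>" "x - c" P]
    by simp
  also have "\<dots> < 1" using d0 by (simp add: power2_eq_square algebra_simps)
  finally have "y \<in> ellipsoid P c" by (simp add: ellipsoid_def)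
  moreover have "dist x y = \<delta> * norm (x - c)"
  proof -
    have "x - y = \<delta> *\<^sub>R (x - c)" unfolding y_def by (simp add: algebra_simps)
    then show ?thesis using d0 by (simp add: dist_norm)
  qed
  moreover have "\<delta> * norm (x - c) < e"
  proof -
    have "\<delta> * norm (x - c) \<le> (e / (2 * norm (x - c))) * norm (x - c)"
      by (rule mult_right_mono) (auto simp: \<delta>_def)
    also have "\<dots> = e / 2" using xc by simp
    finally show ?thesis using e by simp
  qed
  ultimately show "\<exists>y\<in>ellipsoid P c. dist x y < e" by (intro bexI[where x=y]) simp_all
  show "\<exists>y. y \<notin> ellipsoid P c \<and> dist x y < e"
    by (rule exI[of _ x]) (simp add: ellipsoid_def x e)
qed

lemma lin_comb:
  fixes u v :: "real^'n"
  assumes "a *\<^sub>R (2 *\<^sub>R u) + b *\<^sub>R (2 *\<^sub>R v) = 0"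
  shows "b *\<^sub>R v = (- a) *\<^sub>R u"
proof -
  have "2 *\<^sub>R (a *\<^sub>R u + b *\<^sub>R v) = 0" using assms by (simp add: algebra_simps)
  then have "a *\<^sub>R u + b *\<^sub>R v = 0" by simp
  then show ?thesis by (simp add: add_eq_0_iff)
qed

lemma tangent_mult:
  assumes P: "pos_def_matrix P" and Q: "pos_def_matrix Q"
    and x1: "(x - c) \<bullet> (P *v (x - c)) = 1" and x2: "(x - d) \<bullet> (Q *v (x - d)) = 1"
    and ld: "lin_dep2 (ellipsoid_normal P c x) (ellipsoid_normal Q d x)"
  shows "\<exists>\<mu>. Q *v (x - d) = \<mu> *\<^sub>R (P *v (x - c))"
proof -
  have nz1: "P *v (x - c) \<noteq> 0" using x1 by (intro pd_nz[OF P]) auto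
  have nz2: "Q *v (x - d) \<noteq> 0" using x2 by (intro pd_nz[OF Q]) auto
  obtain a b where ab: "a \<noteq> 0 \<or> b \<noteq> 0"
    and eq: "a *\<^sub>R (2 *\<^sub>R (P *v (x - c))) + b *\<^sub>R (2 *\<^sub>R (Q *v (x - d))) = 0"
    using ld unfolding lin_dep2_def ellipsoid_normal_def by blast
  have b: "b \<noteq> 0"
  proof
    assume "b = 0"
    then have "a \<noteq> 0" "(2*a) *\<^sub>R (P *v (x - c)) = 0" using ab eq by auto
    then show False using nz1 by simp
  qed
  have "Q *v (x - d) = (- a / b) *\<^sub>R (P *v (x - c))"
  proof -
    have "b *\<^sub>R (Q *v (x - d)) = (- a) *\<^sub>R (P *v (x - c))"
      using lin_comb[OF eq] .
    then have "(1/b) *\<^sub>R (b *\<^sub>R (Q *v (x - d))) = (1/b) *\<^sub>R ((- a) *\<^sub>R (P *v (x - c)))" by simp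
    then show ?thesis using b by simp
  qed
  then show ?thesis by blast
qed


lemma cont_mv [continuous_intros]:
  fixes A :: "real^'n^'m"
  shows "continuous_on S f \<Longrightarrow> continuous_on S (\<lambda>x. A *v f x)"
  by (rule bounded_linear.continuous_on[OF matrix_vector_mul_bounded_linear])

lemma boundary_ivt:
  fixes P Q :: "real^'n^'n" and a b c d :: "real^'n"
  assumes P: "pos_def_matrix P"
    and a: "(a - c) \<bullet> (P *v (a - c)) = 1" and b: "(b - c) \<bullet> (P *v (b - c)) = 1"
    and seg: "\<forall>t\<in>{0..1}. (1 - t) *\<^sub>R (a - c) + t *\<^sub>R (b - c) \<noteq> 0"
    and ga: "(a - d) \<bullet> (Q *v (a - d)) \<ge> 1" and gb: "(b - d) \<bullet> (Q *v (b - d)) \<le> 1"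
  shows "\<exists>p. (p - c) \<bullet> (P *v (p - c)) = 1 \<and> (p - d) \<bullet> (Q *v (p - d)) = 1"
proof -
  define w where "w t = (1 - t) *\<^sub>R (a - c) + t *\<^sub>R (b - c)" for t :: real
  define k where "k t = w t \<bullet> (P *v w t)" for t
  define \<pi> where "\<pi> t = c + (1 / sqrt (k t)) *\<^sub>R w t" for t
  define h where "h t = (\<pi> t - d) \<bullet> (Q *v (\<pi> t - d))" for t
  have kpos: "k t > 0" if "t \<in> {0..1}" for t
    unfolding k_def using seg that by (intro pd_pos[OF P]) (auto simp: w_def)
  have F\<pi>: "(\<pi> t - c) \<bullet> (P *v (\<pi> t - c)) = 1" if "t \<in> {0..1}" for t
  proof -
    have "(\<pi> t - c) \<bullet> (P *v (\<pi> t - c)) = (1 / sqrt (k t))^2 * k t"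
      unfolding \<pi>_def k_def using scale_quad[of "1 / sqrt (k t)" "w t" P] by (simp add: k_def)
    also have "\<dots> = 1" using kpos[OF that] by (simp add: power_divide)
    finally show ?thesis .
  qed
  have h0: "h 0 = (a - d) \<bullet> (Q *v (a - d))"
    using a by (simp add: h_def \<pi>_def k_def w_def)
  have h1: "h 1 = (b - d) \<bullet> (Q *v (b - d))"
    using b by (simp add: h_def \<pi>_def k_def w_def)
  have cont: "continuous_on {0..1} h"
  proof -
    have cw: "continuous_on {0..1} w" unfolding w_def by (intro continuous_intros)
    have ck: "continuous_on {0..1} k" unfolding k_def by (intro continuous_intros cw)
    have cs: "continuous_on {0..1} (\<lambda>t. 1 / sqrt (k t))"
      by (rule continuous_on_divide) (use kpos in \<open>force intro!: continuous_intros ck\<close>)+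
    have cp: "continuous_on {0..1} \<pi>" unfolding \<pi>_def by (intro continuous_intros cs cw)
    show ?thesis unfolding h_def by (intro continuous_intros cp)
  qed
  obtain t where t: "0 \<le> t" "t \<le> 1" "h t = 1"
    using IVT2'[of h 1 1 0] h0 h1 ga gb cont by auto
  then show ?thesis using F\<pi>[of t] unfolding h_def by auto
qed

lemma expand_t:
  assumes P: "pos_def_matrix P"
  shows "(u + t *\<^sub>R v) \<bullet> (P *v (u + t *\<^sub>R v)) =
    u \<bullet> (P *v u) + 2 * t * (v \<bullet> (P *v u)) + t^2 * (v \<bullet> (P *v v))"
  using pd_expand[OF P, of u "t *\<^sub>R v"] scale_quad[of t v P] by simp

lemma find_b:
  fixes P Q :: "real^'n^'n"
  assumes P: "pos_def_matrix P" and Q: "pos_def_matrix Q"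
    and z1: "(z - c) \<bullet> (P *v (z - c)) < 1" and z2: "(z - d) \<bullet> (Q *v (z - d)) < 1"
    and e1: "(e - c) \<bullet> (P *v (e - c)) \<ge> 1" and e2: "(e - d) \<bullet> (Q *v (e - d)) < 1"
  shows "\<exists>b. (b - c) \<bullet> (P *v (b - c)) = 1 \<and> (b - d) \<bullet> (Q *v (b - d)) < 1"
proof -
  define v where "v = e - z"
  define \<alpha> where "\<alpha> = (z - c) \<bullet> (P *v (z - c))"
  define \<beta> where "\<beta> = v \<bullet> (P *v (z - c))"
  define \<gamma> where "\<gamma> = v \<bullet> (P *v v)"
  have Fl: "(z + t *\<^sub>R v - c) \<bullet> (P *v (z + t *\<^sub>R v - c)) = \<alpha> + 2 * t * \<beta> + t^2 * \<gamma>" for t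
  proof -
    have eq: "z + t *\<^sub>R v - c = (z - c) + t *\<^sub>R v" by (simp add: algebra_simps)
    show ?thesis unfolding eq \<alpha>_def \<beta>_def \<gamma>_def by (rule expand_t[OF P])
  qed
  define \<alpha>' where "\<alpha>' = (z - d) \<bullet> (Q *v (z - d))"
  define \<beta>' where "\<beta>' = v \<bullet> (Q *v (z - d))"
  define \<gamma>' where "\<gamma>' = v \<bullet> (Q *v v)"
  have Gl: "(z + t *\<^sub>R v - d) \<bullet> (Q *v (z + t *\<^sub>R v - d)) = \<alpha>' + 2 * t * \<beta>' + t^2 * \<gamma>'" for t
  proof -
    have eq: "z + t *\<^sub>R v - d = (z - d) + t *\<^sub>R v" by (simp add: algebra_simps)
    show ?thesis unfolding eq \<alpha>'_def \<beta>'_def \<gamma>'_def by (rule expand_t[OF Q])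
  qed
  have ev: "z + 1 *\<^sub>R v = e" by (simp add: v_def)
  have f0: "\<alpha> + 2 * 0 * \<beta> + 0^2 * \<gamma> \<le> 1" using z1 by (simp add: \<alpha>_def)
  have f1: "1 \<le> \<alpha> + 2 * 1 * \<beta> + 1^2 * \<gamma>" using e1 Fl[of 1] ev by simp
  have cont: "continuous_on {0..1} (\<lambda>t. \<alpha> + 2 * t * \<beta> + t^2 * \<gamma>)"
    by (intro continuous_intros)
  obtain t where t: "0 \<le> t" "t \<le> 1" "\<alpha> + 2 * t * \<beta> + t^2 * \<gamma> = 1"
    using IVT'[of "\<lambda>t. \<alpha> + 2 * t * \<beta> + t^2 * \<gamma>" 0 1 1, OF f0 f1 _ cont] by force
  have g0: "\<alpha>' < 1" using z2 by (simp add: \<alpha>'_def)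
  have g1: "\<alpha>' + 2 * \<beta>' + \<gamma>' < 1" using e2 Gl[of 1] ev by simp
  have gam: "\<gamma>' \<ge> 0" unfolding \<gamma>'_def by (rule pd_psd[OF Q])
  have "t^2 * \<gamma>' \<le> t * \<gamma>'"
    using t gam by (intro mult_right_mono) (auto simp: power2_eq_square intro: mult_left_le_one_le)
  moreover have "(1 - t) * \<alpha>' + t * (\<alpha>' + 2 * \<beta>' + \<gamma>') < 1"
  proof (cases "t = 0")
    case True then show ?thesis using g0 by simp
  next
    case False
    then have "t * (\<alpha>' + 2 * \<beta>' + \<gamma>') < t" using t g1 mult_strict_left_mono[of "\<alpha>' + 2 * \<beta>' + \<gamma>'" 1 t] by auto
    moreover have "(1 - t) * \<alpha>' \<le> 1 - t" using t g0 mult_left_mono[of "\<alpha>'" 1 "1 - t"] by auto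
    ultimately show ?thesis by linarith
  qed
  ultimately have "\<alpha>' + 2 * t * \<beta>' + t^2 * \<gamma>' < 1" by (simp add: algebra_simps)
  then show ?thesis using t(3) Fl[of t] Gl[of t] by metis
qed

lemma find_a:
  fixes P Q :: "real^'n^'n"
  assumes P: "pos_def_matrix P" and Q: "pos_def_matrix Q"
    and z1: "(z - c) \<bullet> (P *v (z - c)) < 1" and z2: "(z - d) \<bullet> (Q *v (z - d)) < 1"
    and e1: "(e - c) \<bullet> (P *v (e - c)) < 1" and e2: "(e - d) \<bullet> (Q *v (e - d)) \<ge> 1"
  shows "\<exists>a. (a - c) \<bullet> (P *v (a - c)) = 1 \<and> (a - d) \<bullet> (Q *v (a - d)) > 1"
proof -
  define v where "v = e - z"
  have vnz: "v \<noteq> 0" using z2 e2 by (auto simp: v_def)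
  define \<alpha> where "\<alpha> = (z - c) \<bullet> (P *v (z - c))"
  define \<beta> where "\<beta> = v \<bullet> (P *v (z - c))"
  define \<gamma> where "\<gamma> = v \<bullet> (P *v v)"
  have Fl: "(z + t *\<^sub>R v - c) \<bullet> (P *v (z + t *\<^sub>R v - c)) = \<alpha> + 2 * t * \<beta> + t^2 * \<gamma>" for t
  proof -
    have eq: "z + t *\<^sub>R v - c = (z - c) + t *\<^sub>R v" by (simp add: algebra_simps)
    show ?thesis unfolding eq \<alpha>_def \<beta>_def \<gamma>_def by (rule expand_t[OF P])
  qed
  define \<alpha>' where "\<alpha>' = (z - d) \<bullet> (Q *v (z - d))"
  define \<beta>' where "\<beta>' = v \<bullet> (Q *v (z - d))"
  define \<gamma>' where "\<gamma>' = v \<bullet> (Q *v v)"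
  have Gl: "(z + t *\<^sub>R v - d) \<bullet> (Q *v (z + t *\<^sub>R v - d)) = \<alpha>' + 2 * t * \<beta>' + t^2 * \<gamma>'" for t
  proof -
    have eq: "z + t *\<^sub>R v - d = (z - d) + t *\<^sub>R v" by (simp add: algebra_simps)
    show ?thesis unfolding eq \<alpha>'_def \<beta>'_def \<gamma>'_def by (rule expand_t[OF Q])
  qed
  have ev: "z + 1 *\<^sub>R v = e" by (simp add: v_def)
  have gpos: "\<gamma> > 0" unfolding \<gamma>_def by (rule pd_pos[OF P vnz])
  have gpos': "\<gamma>' > 0" unfolding \<gamma>'_def by (rule pd_pos[OF Q vnz])
  define T where "T = 1 + (\<bar>\<alpha>\<bar> + 2 * \<bar>\<beta>\<bar> + 1) / \<gamma>"
  have T1: "T \<ge> 1" unfolding T_def using gpos by simp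
  have Tg: "(T - 1) * \<gamma> = \<bar>\<alpha>\<bar> + 2 * \<bar>\<beta>\<bar> + 1" unfolding T_def using gpos by simp
  have "T * (T * \<gamma>) \<ge> T * ((T - 1) * \<gamma>)" using T1 gpos by (intro mult_left_mono) auto
  then have h1: "T^2 * \<gamma> \<ge> T * (\<bar>\<alpha>\<bar> + 2 * \<bar>\<beta>\<bar> + 1)" using Tg by (simp add: power2_eq_square algebra_simps)
  have h2: "T * (\<beta> + \<bar>\<beta>\<bar>) \<ge> 0" using T1 by (intro mult_nonneg_nonneg) auto
  have h3: "(T - 1) * \<bar>\<alpha>\<bar> \<ge> 0" using T1 by (intro mult_nonneg_nonneg) auto
  have fT: "1 \<le> \<alpha> + 2 * T * \<beta> + T^2 * \<gamma>"
    using h1 h2 h3 T1 by (simp add: algebra_simps)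
  have f1: "\<alpha> + 2 * 1 * \<beta> + 1^2 * \<gamma> \<le> 1" using e1 Fl[of 1] ev by simp
  have cont: "continuous_on {1..T} (\<lambda>t. \<alpha> + 2 * t * \<beta> + t^2 * \<gamma>)"
    by (intro continuous_intros)
  obtain t where t: "1 \<le> t" "t \<le> T" "\<alpha> + 2 * t * \<beta> + t^2 * \<gamma> = 1"
    using IVT'[of "\<lambda>t. \<alpha> + 2 * t * \<beta> + t^2 * \<gamma>" 1 1 T, OF f1 fT T1 cont] by blast
  have t1: "t > 1"
  proof (rule ccontr)
    assume "\<not> t > 1" then have "t = 1" using t by simp
    then show False using t(3) e1 Fl[of 1] ev by simp
  qed
  have g0: "\<alpha>' < 1" using z2 by (simp add: \<alpha>'_def)
  have g1: "\<alpha>' + 2 * \<beta>' + \<gamma>' \<ge> 1" using e2 Gl[of 1] ev by simp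
  have "(t - 1) * (2 * \<beta>' + (t + 1) * \<gamma>') > 0"
  proof (intro mult_pos_pos)
    have "(t + 1) * \<gamma>' > 1 * \<gamma>'" using t1 gpos' by (intro mult_strict_right_mono) auto
    then show "2 * \<beta>' + (t + 1) * \<gamma>' > 0" using g0 g1 by linarith
  qed (use t1 in auto)
  then have "\<alpha>' + 2 * t * \<beta>' + t^2 * \<gamma>' > \<alpha>' + 2 * \<beta>' + \<gamma>'"
    by (simp add: algebra_simps power2_eq_square)
  then have "\<alpha>' + 2 * t * \<beta>' + t^2 * \<gamma>' > 1" using g1 by linarith
  then show ?thesis using t(3) Fl[of t] Gl[of t] by metis
qed

lemma vec_alg: "(u::'a::real_vector) = m *\<^sub>R U \<Longrightarrow> v = l *\<^sub>R N \<Longrightarrow>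
   (u - v) - l *\<^sub>R (U - N) = (m - l) *\<^sub>R U"
  by (simp add: algebra_simps)

lemma core:
  fixes P Q :: "real^'n^'n" and a b c d p :: "real^'n"
  assumes P: "pos_def_matrix P" and Q: "pos_def_matrix Q"
    and p1: "(p - c) \<bullet> (P *v (p - c)) = 1" and p2: "(p - d) \<bullet> (Q *v (p - d)) = 1"
    and lam: "Q *v (p - d) = l *\<^sub>R (P *v (p - c))"
    and a1: "(a - c) \<bullet> (P *v (a - c)) = 1" and a2: "(a - d) \<bullet> (Q *v (a - d)) > 1"
    and b1: "(b - c) \<bullet> (P *v (b - c)) = 1" and b2: "(b - d) \<bullet> (Q *v (b - d)) < 1"
  shows "\<exists>x. (x - c) \<bullet> (P *v (x - c)) = 1 \<and> (x - d) \<bullet> (Q *v (x - d)) = 1 \<and>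
      \<not> (\<exists>\<mu>. Q *v (x - d) = \<mu> *\<^sub>R (P *v (x - c)))"
proof -
  define n where "n = P *v (p - c)"
  define qf where "qf w = w \<bullet> (Q *v w) - l * (w \<bullet> (P *v w))" for w
  define bil where "bil u v = v \<bullet> (Q *v u) - l * (v \<bullet> (P *v u))" for u v
  define Mv where "Mv w = Q *v w - l *\<^sub>R (P *v w)" for w
  have qf_exp: "qf (u + t *\<^sub>R v) = qf u + 2 * t * bil u v + t^2 * qf v" for u v t
    unfolding qf_def bil_def expand_t[OF P] expand_t[OF Q] by (simp add: algebra_simps)
  have qf_scale: "qf (s *\<^sub>R w) = s^2 * qf w" for s w
    unfolding qf_def scale_quad by (simp add: algebra_simps)
  have qf_Mv: "qf w = w \<bullet> Mv w" for w
    unfolding qf_def Mv_def by (simp add: inner_diff_right)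
  have bil_Mv: "bil u v = v \<bullet> Mv u" for u v
    unfolding bil_def Mv_def by (simp add: inner_diff_right)
  have bil_sym: "bil u v = bil v u" for u v
    unfolding bil_def using pd_sym[OF P, of u v] pd_sym[OF Q, of u v] by simp
  have K1: "(y - d) \<bullet> (Q *v (y - d)) - 1 - l * ((y - c) \<bullet> (P *v (y - c)) - 1) = qf (y - p)" for y
  proof -
    have e1: "y - d = (p - d) + (y - p)" by simp
    have e2: "y - c = (p - c) + (y - p)" by simp
    have "(y - d) \<bullet> (Q *v (y - d)) = 1 + 2 * l * ((y - p) \<bullet> n) + (y - p) \<bullet> (Q *v (y - p))"
      unfolding e1 pd_expand[OF Q] p2 unfolding lam n_def by simp
    moreover have "(y - c) \<bullet> (P *v (y - c)) = 1 + 2 * ((y - p) \<bullet> n) + (y - p) \<bullet> (P *v (y - p))"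
      unfolding e2 pd_expand[OF P] p1 n_def by simp
    moreover have "\<And>G F X qQ qP. G = 1 + 2 * l * X + qQ \<Longrightarrow> F = 1 + 2 * X + qP \<Longrightarrow>
       G - 1 - l * (F - 1) = qQ - l * qP" by (simp add: algebra_simps)
    ultimately show ?thesis unfolding qf_def by blast
  qed
  have K2: "(y - p) \<bullet> n = - ((y - p) \<bullet> (P *v (y - p))) / 2" if "(y - c) \<bullet> (P *v (y - c)) = 1" for y
  proof -
    have e2: "y - c = (p - c) + (y - p)" by simp
    have "(y - c) \<bullet> (P *v (y - c)) = 1 + 2 * ((y - p) \<bullet> n) + (y - p) \<bullet> (P *v (y - p))"
      unfolding e2 pd_expand[OF P] p1 n_def by simp
    then show ?thesis using that by simp
  qed
  define A where "A = a - p"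
  define B where "B = b - p"
  have qA: "qf A > 0" using K1[of a] a1 a2 unfolding A_def by simp
  have qB: "qf B < 0" using K1[of b] b1 b2 unfolding B_def by simp
  have An: "A \<bullet> n < 0"
  proof -
    have "A \<noteq> 0" using a2 p2 unfolding A_def by auto
    then have "A \<bullet> (P *v A) > 0" by (rule pd_pos[OF P])
    then show ?thesis using K2[OF a1] unfolding A_def by simp
  qed
  have Bn: "B \<bullet> n < 0"
  proof -
    have "B \<noteq> 0" using b2 p2 unfolding B_def by auto
    then have "B \<bullet> (P *v B) > 0" by (rule pd_pos[OF P])
    then show ?thesis using K2[OF b1] unfolding B_def by simp
  qed
  define \<beta> where "\<beta> = bil A B"
  define D where "D = \<beta>^2 - qf A * qf B"
  have Dgt: "D > \<beta>^2" unfolding D_def using qA qB by (simp add: mult_pos_neg)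
  define sD where "sD = sqrt D"
  have D0: "0 \<le> D" using order.trans[OF zero_le_power2[of \<beta>] less_imp_le[OF Dgt]] .
  have sD2: "sD^2 = D" unfolding sD_def using D0 by simp
  have sDgt: "sD > \<bar>\<beta>\<bar>" unfolding sD_def using Dgt by (intro real_less_rsqrt) simp
  define t where "t = (\<beta> + sD) / (- qf B)"
  have tpos: "t > 0" unfolding t_def using sDgt qB by (intro divide_pos_pos) auto
  have tq: "t * (- qf B) = \<beta> + sD" unfolding t_def using qB by simp
  define w where "w = A + t *\<^sub>R B"
  have qw: "qf w = 0"
  proof -
    have "qf w = qf A + 2 * t * \<beta> + t^2 * qf B" unfolding w_def qf_exp \<beta>_def ..
    also have "t^2 * qf B = - t * (\<beta> + sD)" 
    proof -
      have "t * qf B = - (\<beta> + sD)" using tq by simp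
      then have "t^2 * qf B = t * (- (\<beta> + sD))" by (simp add: power2_eq_square mult.assoc)
      then show ?thesis by (simp add: algebra_simps)
    qed
    also have "qf A + 2 * t * \<beta> + - t * (\<beta> + sD) = qf A + t * (\<beta> - sD)" by (simp add: algebra_simps)
    also have "t * (\<beta> - sD) = (\<beta> + sD) * (\<beta> - sD) / (- qf B)" unfolding t_def by simp
    also have "(\<beta> + sD) * (\<beta> - sD) = \<beta>^2 - sD^2" by (simp add: power2_eq_square algebra_simps)
    also have "\<dots> = qf A * qf B" using sD2 unfolding D_def by simp
    also have "qf A + qf A * qf B / (- qf B) = 0" using qB by simp
    finally show ?thesis .
  qed
  have wn: "w \<bullet> n < 0"
  proof -
    have "w \<bullet> n = A \<bullet> n + t * (B \<bullet> n)" unfolding w_def by (simp add: inner_add_left)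
    moreover have "t * (B \<bullet> n) < 0" using tpos Bn by (simp add: mult_pos_neg)
    ultimately show ?thesis using An by simp
  qed
  have wPw: "w \<bullet> (P *v w) > 0" using wn by (intro pd_pos[OF P]) auto
  define s where "s = - 2 * (w \<bullet> n) / (w \<bullet> (P *v w))"
  have spos: "s > 0" unfolding s_def using wn wPw by (intro divide_pos_pos) auto
  have sw: "s * (w \<bullet> (P *v w)) = - 2 * (w \<bullet> n)" unfolding s_def using wPw by simp
  define x where "x = p + s *\<^sub>R w"
  have Fx: "(x - c) \<bullet> (P *v (x - c)) = 1"
  proof -
    have e: "x - c = (p - c) + s *\<^sub>R w" unfolding x_def by simp
    have "(x - c) \<bullet> (P *v (x - c)) = 1 + 2 * s * (w \<bullet> n) + s^2 * (w \<bullet> (P *v w))"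
      unfolding e expand_t[OF P] p1 n_def ..
    also have "s^2 * (w \<bullet> (P *v w)) = s * (s * (w \<bullet> (P *v w)))" by (simp add: power2_eq_square)
    also have "\<dots> = s * (- 2 * (w \<bullet> n))" unfolding sw ..
    finally show ?thesis by simp
  qed
  have xp: "x - p = s *\<^sub>R w" unfolding x_def by simp
  have qxp: "qf (x - p) = 0" unfolding xp qf_scale qw by simp
  have Gx: "(x - d) \<bullet> (Q *v (x - d)) = 1" using K1[of x] Fx qxp by simp
  have notang: "\<not> (\<exists>\<mu>. Q *v (x - d) = \<mu> *\<^sub>R (P *v (x - c)))"
  proof
    assume "\<exists>\<mu>. Q *v (x - d) = \<mu> *\<^sub>R (P *v (x - c))"
    then obtain \<mu> where mu: "Q *v (x - d) = \<mu> *\<^sub>R (P *v (x - c))" by blast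
    have Mxp: "Mv (x - p) = (\<mu> - l) *\<^sub>R (P *v (x - c))"
    proof -
      have e1: "x - p = (x - d) - (p - d)" by simp
      have e2: "x - p = (x - c) - (p - c)" by simp
      have "Mv (x - p) = Q *v ((x - d) - (p - d)) - l *\<^sub>R (P *v ((x - c) - (p - c)))"
        unfolding Mv_def using e1 e2 by metis
      also have "\<dots> = (\<mu> - l) *\<^sub>R (P *v (x - c))"
        unfolding matrix_vector_mult_diff_distrib[of Q "x - d" "p - d"]
          matrix_vector_mult_diff_distrib[of P "x - c" "p - c"]
        by (rule vec_alg[OF mu lam])
      finally show ?thesis .
    qed
    then have "qf (x - p) = (\<mu> - l) * ((x - p) \<bullet> (P *v (x - c)))"
      unfolding qf_Mv by simp
    moreover have "(x - p) \<bullet> (P *v (x - c)) > 0"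
    proof -
      have e: "x - c = s *\<^sub>R w + (p - c)" unfolding x_def by simp
      have "(x - p) \<bullet> (P *v (x - c)) = s * s * (w \<bullet> (P *v w)) + s * (w \<bullet> n)"
        unfolding xp e n_def by (simp add: matrix_vector_right_distrib matrix_vector_mult_scaleR inner_add_right)
      also have "\<dots> = s * (- (w \<bullet> n))" using sw by (simp add: algebra_simps)
      finally show ?thesis using spos wn by (simp add: mult_pos_neg)
    qed
    ultimately have "\<mu> = l" using qxp by simp
    then have "Mv (x - p) = 0" using Mxp by simp
    then have "s *\<^sub>R Mv w = 0" unfolding xp Mv_def by (simp add: matrix_vector_mult_scaleR algebra_simps)
    then have Mw: "Mv w = 0" using spos by simp
    have "A = w + (- t) *\<^sub>R B" unfolding w_def by simp
    then have "qf A = qf w + 2 * (- t) * bil w B + (- t)^2 * qf B" using qf_exp by metis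
    also have "bil w B = 0" unfolding bil_Mv Mw by simp
    finally have "qf A = t^2 * qf B" using qw by simp
    moreover have "t^2 * qf B < 0" using tpos qB by (simp add: mult_pos_neg)
    ultimately show False using qA by simp
  qed
  show ?thesis using Fx Gx notang by blast
qed

lemma seg_ok:
  fixes x y :: "real^'n"
  assumes "x $ i \<noteq> 0" "y $ i = 0" "y \<noteq> 0"
  shows "\<forall>t\<in>{0..1}. (1 - t) *\<^sub>R x + t *\<^sub>R y \<noteq> 0"
    and "\<forall>t\<in>{0..1}. (1 - t) *\<^sub>R y + t *\<^sub>R x \<noteq> 0"
proof -
  show "\<forall>t\<in>{0..1}. (1 - t) *\<^sub>R x + t *\<^sub>R y \<noteq> 0"
  proof (intro ballI notI)
    fix t :: real assume t: "t \<in> {0..1}" and h: "(1 - t) *\<^sub>R x + t *\<^sub>R y = 0"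
    then have "((1 - t) *\<^sub>R x + t *\<^sub>R y) $ i = 0" by simp
    then have "t = 1" using assms by simp
    then show False using h assms by simp
  qed
  show "\<forall>t\<in>{0..1}. (1 - t) *\<^sub>R y + t *\<^sub>R x \<noteq> 0"
  proof (intro ballI notI)
    fix t :: real assume t: "t \<in> {0..1}" and h: "(1 - t) *\<^sub>R y + t *\<^sub>R x = 0"
    then have "((1 - t) *\<^sub>R y + t *\<^sub>R x) $ i = 0" by simp
    then have "t = 0" using assms by simp
    then show False using h assms by simp
  qed
qed

lemma find_p:
  fixes P Q :: "real^'n^'n" and a b c d :: "real^'n"
  assumes n2: "CARD('n) \<ge> 2" and P: "pos_def_matrix P"
    and a: "(a - c) \<bullet> (P *v (a - c)) = 1" and b: "(b - c) \<bullet> (P *v (b - c)) = 1"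
    and ga: "(a - d) \<bullet> (Q *v (a - d)) \<ge> 1" and gb: "(b - d) \<bullet> (Q *v (b - d)) \<le> 1"
  shows "\<exists>p. (p - c) \<bullet> (P *v (p - c)) = 1 \<and> (p - d) \<bullet> (Q *v (p - d)) = 1"
proof (cases "\<forall>t\<in>{0..1}. (1 - t) *\<^sub>R (a - c) + t *\<^sub>R (b - c) \<noteq> 0")
  case True
  then show ?thesis using boundary_ivt[OF P a b True ga gb] by blast
next
  case False
  then obtain t0 where t0: "0 \<le> t0" "t0 \<le> 1" "(1 - t0) *\<^sub>R (a - c) + t0 *\<^sub>R (b - c) = 0" by auto
  have anz: "a - c \<noteq> 0" using a by auto
  have bnz: "b - c \<noteq> 0" using b by auto
  obtain i where i: "(a - c) $ i \<noteq> 0" using anz by (metis vec_eq_iff zero_index)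
  obtain j :: 'n where j: "j \<noteq> i"
  proof -
    have "\<not> (UNIV :: 'n set) \<subseteq> {i}"
    proof
      assume "(UNIV :: 'n set) \<subseteq> {i}"
      then have "CARD('n) \<le> card {i}" by (intro card_mono) auto
      then show False using n2 by simp
    qed
    then show ?thesis using that by blast
  qed
  have bi: "(b - c) $ i \<noteq> 0"
  proof
    assume h: "(b - c) $ i = 0"
    have "((1 - t0) *\<^sub>R (a - c) + t0 *\<^sub>R (b - c)) $ i = 0" using t0 by simp
    then have "t0 = 1" using h i by simp
    then show False using t0 bnz by simp
  qed
  define u :: "real^'n" where "u = axis j 1"
  have unz: "u \<noteq> 0" unfolding u_def by (simp add: axis_eq_0_iff)
  have ui: "u $ i = 0" unfolding u_def using j by (simp add: axis_def)
  define k where "k = u \<bullet> (P *v u)"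
  have kpos: "k > 0" unfolding k_def by (rule pd_pos[OF P unz])
  define m where "m = c + (1 / sqrt k) *\<^sub>R u"
  have mc: "m - c = (1 / sqrt k) *\<^sub>R u" unfolding m_def by simp
  have Fm: "(m - c) \<bullet> (P *v (m - c)) = 1"
    unfolding mc scale_quad k_def[symmetric] using kpos by (simp add: power_divide)
  have mi: "(m - c) $ i = 0" unfolding mc using ui by simp
  have mnz: "m - c \<noteq> 0" unfolding mc using unz kpos by simp
  show ?thesis
  proof (cases "(m - d) \<bullet> (Q *v (m - d)) \<ge> 1")
    case True
    show ?thesis using boundary_ivt[OF P Fm b seg_ok(2)[OF bi mi mnz] True gb] by blast
  next
    case False
    then have "(m - d) \<bullet> (Q *v (m - d)) \<le> 1" by simp
    then show ?thesis using boundary_ivt[OF P a Fm seg_ok(1)[OF i mi mnz] ga] by blast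
  qed
qed

theorem proposition2p4:
  fixes P Q :: "real^'n^'n" and c d :: "real^'n"
  assumes "CARD('n) \<ge> 2"
    and "pos_def_matrix P" and "pos_def_matrix Q"
    and "\<forall>x \<in> frontier (ellipsoid P c) \<inter> frontier (ellipsoid Q d).
           lin_dep2 (ellipsoid_normal P c x) (ellipsoid_normal Q d x)"
    and "ellipsoid P c \<inter> ellipsoid Q d \<noteq> {}"
  shows "ellipsoid P c \<subseteq> ellipsoid Q d \<or> ellipsoid Q d \<subseteq> ellipsoid P c"
proof (rule ccontr)
  note n2 = assms(1) and P = assms(2) and Q = assms(3) and tang = assms(4)
  assume neg: "\<not> (ellipsoid P c \<subseteq> ellipsoid Q d \<or> ellipsoid Q d \<subseteq> ellipsoid P c)"
  obtain z where z1: "(z - c) \<bullet> (P *v (z - c)) < 1" and z2: "(z - d) \<bullet> (Q *v (z - d)) < 1"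
    using assms(5) unfolding ellipsoid_def by blast
  obtain e where "e \<in> ellipsoid P c" "e \<notin> ellipsoid Q d" using neg by blast
  then have e1: "(e - c) \<bullet> (P *v (e - c)) < 1" and e2: "(e - d) \<bullet> (Q *v (e - d)) \<ge> 1"
    unfolding ellipsoid_def by auto
  obtain e' where "e' \<in> ellipsoid Q d" "e' \<notin> ellipsoid P c" using neg by blast
  then have e1': "(e' - c) \<bullet> (P *v (e' - c)) \<ge> 1" and e2': "(e' - d) \<bullet> (Q *v (e' - d)) < 1"
    unfolding ellipsoid_def by auto
  obtain a where a1: "(a - c) \<bullet> (P *v (a - c)) = 1" and a2: "(a - d) \<bullet> (Q *v (a - d)) > 1"
    using find_a[OF P Q z1 z2 e1 e2] by blast
  obtain b where b1: "(b - c) \<bullet> (P *v (b - c)) = 1" and b2: "(b - d) \<bullet> (Q *v (b - d)) < 1"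
    using find_b[OF P Q z1 z2 e1' e2'] by blast
  obtain p where p1: "(p - c) \<bullet> (P *v (p - c)) = 1" and p2: "(p - d) \<bullet> (Q *v (p - d)) = 1"
    using find_p[OF n2 P a1 b1, of d Q] a2 b2 by auto
  have T: "\<exists>\<mu>. Q *v (x - d) = \<mu> *\<^sub>R (P *v (x - c))"
    if x1: "(x - c) \<bullet> (P *v (x - c)) = 1" and x2: "(x - d) \<bullet> (Q *v (x - d)) = 1" for x
  proof -
    have "x \<in> frontier (ellipsoid P c) \<inter> frontier (ellipsoid Q d)"
      using level_frontier[OF P x1] level_frontier[OF Q x2] by blast
    then have "lin_dep2 (ellipsoid_normal P c x) (ellipsoid_normal Q d x)" using tang by blast
    then show ?thesis by (rule tangent_mult[OF P Q x1 x2])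
  qed
  obtain l where l: "Q *v (p - d) = l *\<^sub>R (P *v (p - c))" using T[OF p1 p2] by blast
  obtain x where x1: "(x - c) \<bullet> (P *v (x - c)) = 1" and x2: "(x - d) \<bullet> (Q *v (x - d)) = 1"
    and nt: "\<not> (\<exists>\<mu>. Q *v (x - d) = \<mu> *\<^sub>R (P *v (x - c)))"
    using core[OF P Q p1 p2 l a1 a2 b1 b2] by blast
  show False using T[OF x1 x2] nt by blast
qed

end
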